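(* Let $G$ be a simple graph with vertex set $V$, $\mu$ a positive integer, and $\mathcal K$ a clique partition of $\mu G$. Let $V^*$ be the set of $\mathcal K$-essential vertices, $G^*=G[V^*]$ the induced subgraph, and $\mathcal K^*$ the multiset of nonempty restrictions $K[V^*]$ of cliques $K\in\mathcal K$ to $V^*$ (which, when $V^*\neq\emptyset$, is a clique partition of $\mu G^*$). Then $$\lambda(G)=-\frac{r(\mathcal K)}{\mu}\quad\text{if and only if}\quad V^*\ne\emptyset\ \text{and}\ \lambda(G^* )=-\frac{r(\mathcal K^* )}{\mu}.$$ Moreover, if $\lambda(G)=-r(\mathcal K)/\mu$, then $\lambda(G)=\lambda(G^* )$ and $r_u(\mathcal K^* )=r(\mathcal K)$ for all $u\in V^*$.
   Context: $\lambda(\cdot)$ is the smallest adjacency eigenvalue. A clique of $G$ is a complete subgraph on at least two vertices. A clique partition of $\mu G$ ($\mu$ a positive integer) is a finite multiset $\mathcal K$ of cliques of $G$ such that every edge of $G$ lies in exactly $\mu$ members of $\mathcal K$ (with multiplicity); $r_u(\mathcal K)$ is the number of members containing vertex $u$ and $r(\mathcal K)=\max_u r_u(\mathcal K)$. The $\mathcal K$-essential vertices are defined as follows: let $V^1=\{u\in V: r_u(\mathcal K)=r(\mathcal K)\}$, and for $i\ge1$ let $V^{i+1}=V^i\setminus\{v: V(K)\cap V^i=\{v\}\text{ for some }K\in\mathcal K\}$; the sequence stabilizes at a set $V^*$ (possibly empty), whose elements are the $\mathcal K$-essential vertices. Every clique of $\mathcal K$ is then either disjoint from $V^*$ or meets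 it in at least two vertices. *)

theory Defs
  imports Complex_Main "HOL-Library.Multiset"
begin

definition simple_graph :: "'a set \<Rightarrow> 'a set set \<Rightarrow> bool" where
  "simple_graph V E \<longleftrightarrow> finite V \<and> (\<forall>e\<in>E. e \<subseteq> V \<and> card e = 2)"

definition adj_eigenvalues :: "'a set \<Rightarrow> 'a set set \<Rightarrow> real set" where
  "adj_eigenvalues V E = {l. \<exists>x :: 'a \<Rightarrow> real. (\<exists>v\<in>V. x v \<noteq> 0) \<and>
      (\<forall>u\<in>V. (\<Sum>v\<in>{v\<in>V. {u, v} \<in> E}. x v) = l * x u)}"

definition lambda_min :: "'a set \<Rightarrow> 'a set set \<Rightarrow> real" where
  "lambda_min V E = Min (adj_eigenvalues V E)"

definition is_clique :: "'a set \<Rightarrow> 'a set set \<Rightarrow> 'a set \<Rightarrow> bool" where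
  "is_clique V E K \<longleftrightarrow> K \<subseteq> V \<and> finite K \<and> card K \<ge> 2 \<and>
      (\<forall>u\<in>K. \<forall>v\<in>K. u \<noteq> v \<longrightarrow> {u, v} \<in> E)"

definition clique_partition :: "'a set \<Rightarrow> 'a set set \<Rightarrow> nat \<Rightarrow> 'a set multiset \<Rightarrow> bool" where
  "clique_partition V E mu \<K> \<longleftrightarrow> (\<forall>K\<in>#\<K>. is_clique V E K) \<and>
      (\<forall>e\<in>E. size (filter_mset (\<lambda>K. e \<subseteq> K) \<K>) = mu)"

definition r_at :: "'a set multiset \<Rightarrow> 'a \<Rightarrow> nat" where
  "r_at \<K> u = size (filter_mset (\<lambda>K. u \<in> K) \<K>)"

definition r_max :: "'a set \<Rightarrow> 'a set multiset \<Rightarrow> nat" where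
  "r_max V \<K> = Max (r_at \<K> ` V)"

definition ess_step :: "'a set multiset \<Rightarrow> 'a set \<Rightarrow> 'a set" where
  "ess_step \<K> W = W - {v. \<exists>K\<in>#\<K>. K \<inter> W = {v}}"

text \<open>V^1, then iterate; the decreasing sequence stabilizes at its intersection.\<close>
definition essential :: "'a set \<Rightarrow> 'a set multiset \<Rightarrow> 'a set" where
  "essential V \<K> = (\<Inter>i. (ess_step \<K> ^^ i) {u\<in>V. r_at \<K> u = r_max V \<K>})"

definition induced_edges :: "'a set set \<Rightarrow> 'a set \<Rightarrow> 'a set set" where
  "induced_edges E W = {e\<in>E. e \<subseteq> W}"

definition restrict_partition :: "'a set multiset \<Rightarrow> 'a set \<Rightarrow> 'a set multiset" where
  "restrict_partition \<K> W = image_mset (\<lambda>K. K \<inter> W) (filter_mset (\<lambda>K. K \<inter> W \<noteq> {}) \<K>)"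

end

theory Submission
  imports Defs "Jordan_Normal_Form.Spectral_Radius"
begin


definition adjM :: "nat \<Rightarrow> (nat \<Rightarrow> 'a) \<Rightarrow> 'a set set \<Rightarrow> 'k::field mat" where
  "adjM n f E = mat n n (\<lambda>(i,j). if {f i, f j} \<in> E then 1 else 0)"

lemma adjM_mult:
  fixes w :: "'k::field vec"
  assumes bij: "bij_betw f {0..<n} V" and i: "i < n" and w: "dim_vec w = n"
  shows "(adjM n f E *\<^sub>v w) $ i = (\<Sum>v\<in>{v\<in>V. {f i, v} \<in> E}. w $ (inv_into {0..<n} f v))"
proof -
  have fin: "finite V" using bij bij_betw_finite by blast
  have "(adjM n f E *\<^sub>v w) $ i = (\<Sum>j\<in>{0..<n}. (if {f i, f j} \<in> E then 1 else 0) * w $ j)"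
    using i w by (simp add: adjM_def scalar_prod_def)
  also have "\<dots> = (\<Sum>j\<in>{0..<n}. (\<lambda>v. if {f i, v} \<in> E then w $ (inv_into {0..<n} f v) else 0) (f j))"
    apply (rule sum.cong[OF refl])
    using bij by (auto simp: bij_betw_inv_into_left)
  also have "\<dots> = (\<Sum>v\<in>V. if {f i, v} \<in> E then w $ (inv_into {0..<n} f v) else 0)"
    by (rule sum.reindex_bij_betw[OF bij])
  also have "\<dots> = (\<Sum>v\<in>{v\<in>V. {f i, v} \<in> E}. w $ (inv_into {0..<n} f v))"
    using fin by (simp add: sum.inter_filter)
  finally show ?thesis .
qed

lemma eig_to_mat:
  fixes l :: "'k::field" and x :: "'a \<Rightarrow> 'k"
  assumes bij: "bij_betw f {0..<n} V"
    and nz: "\<exists>v\<in>V. x v \<noteq> 0"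
    and eq: "\<forall>u\<in>V. (\<Sum>v\<in>{v\<in>V. {u, v} \<in> E}. x v) = l * x u"
  shows "eigenvalue (adjM n f E :: 'k mat) l"
proof -
  define w where "w = vec n (\<lambda>j. x (f j))"
  have dw: "dim_vec w = n" by (simp add: w_def)
  have wx: "w $ (inv_into {0..<n} f v) = x v" if "v \<in> V" for v
  proof -
    have "inv_into {0..<n} f v \<in> {0..<n}" using bij that
      by (metis bij_betw_def inv_into_into)
    moreover have "f (inv_into {0..<n} f v) = v" using bij that
      by (meson bij_betw_inv_into_right)
    ultimately show ?thesis by (simp add: w_def)
  qed
  have "w \<noteq> 0\<^sub>v n"
  proof
    assume "w = 0\<^sub>v n"
    from nz obtain v where v: "v \<in> V" "x v \<noteq> 0" by auto
    have "inv_into {0..<n} f v < n" using bij v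
      by (metis atLeastLessThan_iff bij_betw_def inv_into_into)
    then have "w $ (inv_into {0..<n} f v) = 0" using \<open>w = 0\<^sub>v n\<close> by simp
    with wx[OF v(1)] v(2) show False by simp
  qed
  moreover have "adjM n f E *\<^sub>v w = l \<cdot>\<^sub>v w"
  proof (rule eq_vecI)
    fix i assume "i < dim_vec (l \<cdot>\<^sub>v w)"
    then have i: "i < n" by (simp add: dw)
    have fi: "f i \<in> V" using bij i bij_betwE by fastforce
    have "(adjM n f E *\<^sub>v w) $ i = (\<Sum>v\<in>{v\<in>V. {f i, v} \<in> E}. w $ (inv_into {0..<n} f v))"
      by (rule adjM_mult[OF bij i dw])
    also have "\<dots> = (\<Sum>v\<in>{v\<in>V. {f i, v} \<in> E}. x v)"
      by (rule sum.cong) (auto simp: wx)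
    also have "\<dots> = l * x (f i)" using eq fi by auto
    finally show "(adjM n f E *\<^sub>v w) $ i = (l \<cdot>\<^sub>v w) $ i"
      using i by (simp add: w_def)
  qed (simp add: adjM_def dw)
  ultimately show ?thesis unfolding eigenvalue_def eigenvector_def
    by (intro exI[of _ w]) (simp add: adjM_def w_def)
qed

lemma mat_to_eig:
  fixes l :: "'k::field"
  assumes bij: "bij_betw f {0..<n} V"
    and ev: "eigenvalue (adjM n f E :: 'k mat) l"
  shows "\<exists>x :: 'a \<Rightarrow> 'k. (\<exists>v\<in>V. x v \<noteq> 0) \<and>
      (\<forall>u\<in>V. (\<Sum>v\<in>{v\<in>V. {u, v} \<in> E}. x v) = l * x u)"
proof -
  from ev obtain w where w: "w \<in> carrier_vec n" "w \<noteq> 0\<^sub>v n" "adjM n f E *\<^sub>v w = l \<cdot>\<^sub>v w"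
    unfolding eigenvalue_def eigenvector_def by (auto simp: adjM_def)
  define x where "x v = w $ (inv_into {0..<n} f v)" for v
  have dw: "dim_vec w = n" using w by auto
  have "\<exists>j<n. w $ j \<noteq> 0"
  proof (rule ccontr)
    assume "\<not> ?thesis"
    then have "w = 0\<^sub>v n" by (intro eq_vecI) (auto simp: dw)
    with w show False by simp
  qed
  then obtain j where j: "j < n" "w $ j \<noteq> 0" by auto
  have "f j \<in> V" using bij j bij_betwE by fastforce
  moreover have "x (f j) = w $ j" using bij j unfolding x_def
    by (simp add: bij_betw_inv_into_left)
  ultimately have nz: "\<exists>v\<in>V. x v \<noteq> 0" using j by metis
  have "\<forall>u\<in>V. (\<Sum>v\<in>{v\<in>V. {u, v} \<in> E}. x v) = l * x u"
  proof
    fix u assume u: "u \<in> V"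
    define i where "i = inv_into {0..<n} f u"
    have i: "i < n" using bij u unfolding i_def
      by (metis atLeastLessThan_iff bij_betw_def inv_into_into)
    have fi: "f i = u" using bij u unfolding i_def by (meson bij_betw_inv_into_right)
    have "(\<Sum>v\<in>{v\<in>V. {u, v} \<in> E}. x v) = (adjM n f E *\<^sub>v w) $ i"
      using adjM_mult[OF bij i dw] fi by (simp add: x_def)
    also have "\<dots> = l * x u" using w(3) i dw by (simp add: x_def i_def)
    finally show "(\<Sum>v\<in>{v\<in>V. {u, v} \<in> E}. x v) = l * x u" .
  qed
  with nz show ?thesis by blast
qed

lemma adjM_carrier: "adjM n f E \<in> carrier_mat n n"
  by (simp add: adjM_def)

lemma finite_eig:
  assumes "finite V"
  shows "finite (adj_eigenvalues V E)"
proof -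
  obtain f where bij: "bij_betw f {0..<card V} V"
    using assms ex_bij_betw_nat_finite by blast
  have "adj_eigenvalues V E \<subseteq> spectrum (adjM (card V) f E :: real mat)"
    unfolding adj_eigenvalues_def spectrum_def
    using eig_to_mat[OF bij] by blast
  moreover have "finite (spectrum (adjM (card V) f E :: real mat))"
    by (rule card_finite_spectrum(1)[OF adjM_carrier])
  ultimately show ?thesis by (rule finite_subset)
qed


lemma nonempty_eig:
  assumes fin: "finite V" and ne: "V \<noteq> {}"
  shows "adj_eigenvalues V E \<noteq> {}"
proof -
  obtain f where bij: "bij_betw f {0..<card V} V"
    using fin ex_bij_betw_nat_finite by blast
  have n: "card V > 0" using fin ne by auto
  from spectrum_non_empty[OF adjM_carrier n]
  obtain z where "eigenvalue (adjM (card V) f E :: complex mat) z"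
    unfolding spectrum_def by auto
  from mat_to_eig[OF bij this] obtain x :: "'a \<Rightarrow> complex" where
    nz: "\<exists>v\<in>V. x v \<noteq> 0" and eq: "\<forall>u\<in>V. (\<Sum>v\<in>{v\<in>V. {u, v} \<in> E}. x v) = z * x u"
    by blast
  define T where "T = (\<Sum>u\<in>V. \<Sum>v\<in>V. if {u,v} \<in> E then cnj (x u) * x v else 0)"
  have T1: "T = (\<Sum>u\<in>V. cnj (x u) * (\<Sum>v\<in>{v\<in>V. {u, v} \<in> E}. x v))"
    unfolding T_def using fin
    by (simp add: sum.inter_filter sum_distrib_left if_distrib cong: if_cong)
  also have "\<dots> = (\<Sum>u\<in>V. z * complex_of_real ((cmod (x u))^2))"
  proof (intro sum.cong refl)
    fix u assume "u \<in> V"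
    have "cnj (x u) * x u = complex_of_real ((cmod (x u))^2)"
      by (metis complex_mult_cnj cmod_power2 mult.commute)
    then show "cnj (x u) * (\<Sum>v\<in>{v\<in>V. {u, v} \<in> E}. x v) = z * complex_of_real ((cmod (x u))^2)"
      using eq \<open>u \<in> V\<close> by (metis mult.left_commute)
  qed
  finally have T2: "T = z * complex_of_real (\<Sum>u\<in>V. (cmod (x u))^2)"
    by (simp add: sum_distrib_left)
  have "cnj T = (\<Sum>u\<in>V. \<Sum>v\<in>V. if {u,v} \<in> E then x u * cnj (x v) else 0)"
    unfolding T_def by (simp add: cnj_sum if_distrib cong: if_cong)
  also have "\<dots> = (\<Sum>v\<in>V. \<Sum>u\<in>V. if {u,v} \<in> E then x u * cnj (x v) else 0)"
    by (rule sum.swap)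
  also have "\<dots> = T" unfolding T_def
    by (intro sum.cong refl) (auto simp: insert_commute mult.commute)
  finally have cT: "cnj T = T" .
  define S where "S = (\<Sum>u\<in>V. (cmod (x u))^2)"
  obtain v0 where v0: "v0 \<in> V" "x v0 \<noteq> 0" using nz by auto
  have "S > 0" unfolding S_def
    by (rule sum_pos2[OF fin v0(1)]) (use v0 in auto)
  have "cnj z * complex_of_real S = z * complex_of_real S"
    using cT T2 unfolding S_def by (metis complex_cnj_complex_of_real complex_cnj_mult)
  then have "cnj z = z" using \<open>S > 0\<close> by simp
  then have "Im z = 0" by (metis complex.sel(2) cnj.sel(2) neg_equal_zero)
  then have zr: "z = complex_of_real (Re z)" by (simp add: complex_eq_iff)
  define l where "l = Re z"
  have eqR: "(\<Sum>v\<in>{v\<in>V. {u, v} \<in> E}. Re (x v)) = l * Re (x u)"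
    and eqI: "(\<Sum>v\<in>{v\<in>V. {u, v} \<in> E}. Im (x v)) = l * Im (x u)" if "u \<in> V" for u
  proof -
    have "(\<Sum>v\<in>{v\<in>V. {u, v} \<in> E}. x v) = complex_of_real l * x u"
      using eq that zr l_def by auto
    then have "Re (\<Sum>v\<in>{v\<in>V. {u, v} \<in> E}. x v) = Re (complex_of_real l * x u)"
      and "Im (\<Sum>v\<in>{v\<in>V. {u, v} \<in> E}. x v) = Im (complex_of_real l * x u)" by simp_all
    then show "(\<Sum>v\<in>{v\<in>V. {u, v} \<in> E}. Re (x v)) = l * Re (x u)"
      and "(\<Sum>v\<in>{v\<in>V. {u, v} \<in> E}. Im (x v)) = l * Im (x u)"
      by (simp_all add: Re_sum Im_sum)
  qed
  show ?thesis
  proof (cases "Re (x v0) = 0")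
    case True
    then have "Im (x v0) \<noteq> 0" using v0 complex_eqI by force
    then have "l \<in> adj_eigenvalues V E" unfolding adj_eigenvalues_def
      using v0 eqI by (intro CollectI exI[of _ "\<lambda>v. Im (x v)"]) auto
    then show ?thesis by auto
  next
    case False
    then have "l \<in> adj_eigenvalues V E" unfolding adj_eigenvalues_def
      using v0 eqR by (intro CollectI exI[of _ "\<lambda>v. Re (x v)"]) auto
    then show ?thesis by auto
  qed
qed



definition wcp :: "'a set \<Rightarrow> 'a set set \<Rightarrow> nat \<Rightarrow> 'a set multiset \<Rightarrow> bool" where
  "wcp V E mu \<K> \<longleftrightarrow> (\<forall>K\<in>#\<K>. K \<subseteq> V \<and> (\<forall>u\<in>K. \<forall>v\<in>K. u \<noteq> v \<longrightarrow> {u, v} \<in> E)) \<and>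
      (\<forall>e\<in>E. size (filter_mset (\<lambda>K. e \<subseteq> K) \<K>) = mu)"

definition adjs :: "'a set \<Rightarrow> 'a set set \<Rightarrow> ('a \<Rightarrow> real) \<Rightarrow> 'a \<Rightarrow> real" where
  "adjs V E x u = (\<Sum>v\<in>{v\<in>V. {u, v} \<in> E}. x v)"

lemma mset_swap: "(\<Sum>K\<in>#M. \<Sum>v\<in>A. h K v) = (\<Sum>v\<in>A. \<Sum>K\<in>#M. (h K v :: real))"
  by (induction M) (auto simp: sum.distrib)

lemma mset_if_count: "(\<Sum>K\<in>#M. if P K then c else 0) = c * real (size (filter_mset P M))"
  by (induction M) (auto simp: algebra_simps)

lemma mset_diff: "(\<Sum>K\<in>#M. f K - g K) = (\<Sum>K\<in>#M. f K) - (\<Sum>K\<in>#M. (g K :: real))"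
  by (induction M) auto

lemma mset_mult: "c * (\<Sum>K\<in>#M. f K) = (\<Sum>K\<in>#M. c * (f K :: real))"
  by (induction M) (auto simp: algebra_simps)

lemma mset_nonneg: "(\<And>K. f K \<ge> 0) \<Longrightarrow> (\<Sum>K\<in>#M. f K) \<ge> (0::real)"
  by (induction M) auto

lemma mset_zero: "(\<And>K. f K \<ge> 0) \<Longrightarrow> (\<Sum>K\<in>#M. f K) = (0::real) \<Longrightarrow> K \<in># M \<Longrightarrow> f K = 0"
proof (induction M)
  case empty then show ?case by simp
next
  case (add a M)
  have "(\<Sum>K\<in>#M. f K) \<ge> 0" using add.prems(1) by (rule mset_nonneg)
  moreover have "f a \<ge> 0" using add.prems(1) .
  ultimately have "f a = 0" "(\<Sum>K\<in>#M. f K) = 0" using add.prems(2) by auto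
  then show ?case using add by auto
qed

lemma mset_cong: "(\<And>K. K \<in># M \<Longrightarrow> f K = g K) \<Longrightarrow> (\<Sum>K\<in>#M. f K) = (\<Sum>K\<in>#M. (g K :: real))"
  by (metis image_mset_cong)

lemma key:
  assumes w: "wcp V E mu \<K>" and sg: "simple_graph V E" and u: "u \<in> V"
  shows "real mu * adjs V E x u = (\<Sum>K\<in>#\<K>. if u \<in> K then sum x K - x u else 0)"
proof -
  have fin: "finite V" using sg by (simp add: simple_graph_def)
  have Kv: "K \<subseteq> V" if "K \<in># \<K>" for K using w that by (simp add: wcp_def)
  have uu: "{u, u} \<notin> E" using sg by (auto simp: simple_graph_def)
  have "(\<Sum>K\<in>#\<K>. if u \<in> K then sum x K - x u else 0)
      = (\<Sum>K\<in>#\<K>. \<Sum>v\<in>V. if u \<in> K \<and> v \<in> K \<and> v \<noteq> u then x v else 0)"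
  proof (rule mset_cong)
    fix K assume K: "K \<in># \<K>"
    have fK: "finite K" using Kv[OF K] fin finite_subset by blast
    show "(if u \<in> K then sum x K - x u else 0) = (\<Sum>v\<in>V. if u \<in> K \<and> v \<in> K \<and> v \<noteq> u then x v else 0)"
    proof (cases "u \<in> K")
      case True
      have "sum x K - x u = sum x (K - {u})" using fK True by (simp add: sum_diff1)
      also have "\<dots> = sum x (V \<inter> (K - {u}))" using Kv[OF K] by (metis Int_absorb1 Diff_subset order_trans)
      also have "\<dots> = (\<Sum>v\<in>V. if v \<in> K - {u} then x v else 0)" using fin by (rule sum.inter_restrict)
      finally show ?thesis using True by (auto intro: sum.cong)
    qed simp
  qed
  also have "\<dots> = (\<Sum>v\<in>V. \<Sum>K\<in>#\<K>. if u \<in> K \<and> v \<in> K \<and> v \<noteq> u then x v else 0)"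
    by (rule mset_swap)
  also have "\<dots> = (\<Sum>v\<in>V. if {u, v} \<in> E then real mu * x v else 0)"
  proof (rule sum.cong[OF refl])
    fix v assume v: "v \<in> V"
    show "(\<Sum>K\<in>#\<K>. if u \<in> K \<and> v \<in> K \<and> v \<noteq> u then x v else 0) = (if {u, v} \<in> E then real mu * x v else 0)"
    proof (cases "v = u")
      case True then show ?thesis using uu by simp
    next
      case False
      have "(\<Sum>K\<in>#\<K>. if u \<in> K \<and> v \<in> K \<and> v \<noteq> u then x v else 0) = (\<Sum>K\<in>#\<K>. if {u,v} \<subseteq> K then x v else 0)"
        using False by (intro mset_cong) auto
      also have "\<dots> = x v * real (size (filter_mset (\<lambda>K. {u,v} \<subseteq> K) \<K>))"
        by (rule mset_if_count)
      also have "\<dots> = (if {u, v} \<in> E then real mu * x v else 0)"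
      proof (cases "{u, v} \<in> E")
        case True
        from w True have h: "size (filter_mset (\<lambda>K. {u,v} \<subseteq> K) \<K>) = mu"
          unfolding wcp_def by blast
        show ?thesis using True h by simp
      next
        case nE: False
        have "filter_mset (\<lambda>K. {u,v} \<subseteq> K) \<K> = {#}"
          using w nE False by (auto simp: wcp_def filter_mset_eq_mempty_iff)
        then show ?thesis using nE by simp
      qed
      finally show ?thesis .
    qed
  qed
  also have "\<dots> = real mu * adjs V E x u"
    unfolding adjs_def using fin by (simp add: sum.inter_filter sum_distrib_left if_distrib cong: if_cong)
  finally show ?thesis by simp
qed

lemma quad:
  assumes w: "wcp V E mu \<K>" and sg: "simple_graph V E"
  shows "real mu * (\<Sum>u\<in>V. x u * adjs V E x u)
       = (\<Sum>K\<in>#\<K>. (sum x K)^2) - (\<Sum>u\<in>V. real (r_at \<K> u) * (x u)^2)"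
proof -
  have fin: "finite V" using sg by (simp add: simple_graph_def)
  have Kv: "K \<subseteq> V" if "K \<in># \<K>" for K using w that by (simp add: wcp_def)
  have "real mu * (\<Sum>u\<in>V. x u * adjs V E x u) = (\<Sum>u\<in>V. x u * (real mu * adjs V E x u))"
    by (simp add: sum_distrib_left algebra_simps)
  also have "\<dots> = (\<Sum>u\<in>V. x u * (\<Sum>K\<in>#\<K>. if u \<in> K then sum x K - x u else 0))"
    using key[OF w sg] by (intro sum.cong) auto
  also have "\<dots> = (\<Sum>u\<in>V. (\<Sum>K\<in>#\<K>. if u \<in> K then x u * sum x K else 0) - (\<Sum>K\<in>#\<K>. if u \<in> K then (x u)^2 else 0))"
  proof (intro sum.cong refl)
    fix u
    have "x u * (\<Sum>K\<in>#\<K>. if u \<in> K then sum x K - x u else 0)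
        = (\<Sum>K\<in>#\<K>. (if u \<in> K then x u * sum x K else 0) - (if u \<in> K then (x u)^2 else 0))"
    proof -
      have "x u * (\<Sum>K\<in>#\<K>. if u \<in> K then sum x K - x u else 0)
          = (\<Sum>K\<in>#\<K>. x u * (if u \<in> K then sum x K - x u else 0))" by (rule mset_mult)
      also have "\<dots> = (\<Sum>K\<in>#\<K>. (if u \<in> K then x u * sum x K else 0) - (if u \<in> K then (x u)^2 else 0))"
        by (rule mset_cong) (simp add: power2_eq_square algebra_simps)
      finally show ?thesis .
    qed
    then show "x u * (\<Sum>K\<in>#\<K>. if u \<in> K then sum x K - x u else 0) = (\<Sum>K\<in>#\<K>. if u \<in> K then x u * sum x K else 0) - (\<Sum>K\<in>#\<K>. if u \<in> K then (x u)^2 else 0)"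
      by (simp add: mset_diff)
  qed
  also have "\<dots> = (\<Sum>u\<in>V. \<Sum>K\<in>#\<K>. if u \<in> K then x u * sum x K else 0) - (\<Sum>u\<in>V. real (r_at \<K> u) * (x u)^2)"
    by (simp add: sum_subtractf mset_if_count r_at_def mult.commute)
  also have "(\<Sum>u\<in>V. \<Sum>K\<in>#\<K>. if u \<in> K then x u * sum x K else 0) = (\<Sum>K\<in>#\<K>. \<Sum>u\<in>V. if u \<in> K then x u * sum x K else 0)"
    by (rule mset_swap[symmetric])
  also have "\<dots> = (\<Sum>K\<in>#\<K>. (sum x K)^2)"
  proof (rule mset_cong)
    fix K assume K: "K \<in># \<K>"
    have "(\<Sum>u\<in>V. if u \<in> K then x u * sum x K else 0) = sum (\<lambda>u. x u * sum x K) (V \<inter> K)"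
      using fin by (simp add: sum.inter_restrict)
    also have "V \<inter> K = K" using Kv[OF K] by auto
    finally show "(\<Sum>u\<in>V. if u \<in> K then x u * sum x K else 0) = (sum x K)^2"
      by (simp add: power2_eq_square sum_distrib_right)
  qed
  finally show ?thesis .
qed

lemma r_le:
  assumes "finite V" "u \<in> V" shows "r_at \<K> u \<le> r_max V \<K>"
  unfolding r_max_def using assms by auto

lemma bound:
  assumes w: "wcp V E mu \<K>" and sg: "simple_graph V E" and mu: "mu > 0"
    and l: "l \<in> adj_eigenvalues V E"
  shows "l \<ge> - real (r_max V \<K>) / real mu"
proof -
  have fin: "finite V" using sg by (simp add: simple_graph_def)
  from l obtain x where nz: "\<exists>v\<in>V. x v \<noteq> 0" and eq: "\<forall>u\<in>V. adjs V E x u = l * x u"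
    unfolding adj_eigenvalues_def adjs_def by auto
  define r where "r = real (r_max V \<K>)"
  define Sq where "Sq = (\<Sum>u\<in>V. (x u)^2)"
  have Sq: "Sq > 0" unfolding Sq_def using nz fin
    by (metis sum_pos2 power2_less_0 zero_less_power2 not_less)
  have "real mu * (l * Sq) = real mu * (\<Sum>u\<in>V. x u * adjs V E x u)"
    unfolding Sq_def using eq by (simp add: sum_distrib_left power2_eq_square algebra_simps)
  also have "\<dots> = (\<Sum>K\<in>#\<K>. (sum x K)^2) - (\<Sum>u\<in>V. real (r_at \<K> u) * (x u)^2)"
    by (rule quad[OF w sg])
  also have "\<dots> \<ge> 0 - (\<Sum>u\<in>V. r * (x u)^2)"
  proof (rule diff_mono)
    show "0 \<le> (\<Sum>K\<in>#\<K>. (sum x K)^2)" by (rule mset_nonneg) simp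
    show "(\<Sum>u\<in>V. real (r_at \<K> u) * (x u)^2) \<le> (\<Sum>u\<in>V. r * (x u)^2)"
      using r_le[OF fin] unfolding r_def by (intro sum_mono mult_right_mono) auto
  qed
  also have "0 - (\<Sum>u\<in>V. r * (x u)^2) = - r * Sq" unfolding Sq_def by (simp add: sum_distrib_left sum_negf)
  finally have "real mu * l * Sq \<ge> - r * Sq" by (simp add: algebra_simps)
  then have "(- r) * Sq \<le> (real mu * l) * Sq" by simp
  then have "real mu * l \<ge> - r" using Sq mult_le_cancel_right_pos by blast
  then show ?thesis using mu unfolding r_def by (simp add: field_simps)
qed

lemma eqcase:
  fixes x :: "'a \<Rightarrow> real"
  assumes w: "wcp V E mu \<K>" and sg: "simple_graph V E" and mu: "mu > 0"
    and eq: "\<forall>u\<in>V. adjs V E x u = (- real (r_max V \<K>) / real mu) * x u"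
  shows "(\<forall>K\<in>#\<K>. sum x K = 0) \<and> (\<forall>u\<in>V. x u \<noteq> 0 \<longrightarrow> r_at \<K> u = r_max V \<K>)"
proof -
  have fin: "finite V" using sg by (simp add: simple_graph_def)
  define r where "r = real (r_max V \<K>)"
  have "(\<Sum>u\<in>V. x u * adjs V E x u) = (\<Sum>u\<in>V. (- r / real mu) * (x u)^2)"
    using eq unfolding r_def by (intro sum.cong refl) (simp add: power2_eq_square)
  also have "\<dots> = (- r / real mu) * (\<Sum>u\<in>V. (x u)^2)" by (rule sum_distrib_left[symmetric])
  finally have "real mu * (\<Sum>u\<in>V. x u * adjs V E x u) = real mu * ((- r / real mu) * (\<Sum>u\<in>V. (x u)^2))"
    by simp
  also have "\<dots> = - r * (\<Sum>u\<in>V. (x u)^2)" using mu by simp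
  finally have "real mu * (\<Sum>u\<in>V. x u * adjs V E x u) = - r * (\<Sum>u\<in>V. (x u)^2)" .
  moreover note quad[OF w sg, of x]
  moreover have "(\<Sum>u\<in>V. (r - real (r_at \<K> u)) * (x u)^2) = r * (\<Sum>u\<in>V. (x u)^2) - (\<Sum>u\<in>V. real (r_at \<K> u) * (x u)^2)"
    by (simp add: sum_subtractf sum_distrib_left algebra_simps)
  ultimately
  have "(\<Sum>K\<in>#\<K>. (sum x K)^2) + (\<Sum>u\<in>V. (r - real (r_at \<K> u)) * (x u)^2) = 0"
    by linarith
  moreover have A: "(\<Sum>K\<in>#\<K>. (sum x K)^2) \<ge> 0" by (rule mset_nonneg) simp
  moreover have B: "(\<Sum>u\<in>V. (r - real (r_at \<K> u)) * (x u)^2) \<ge> 0"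
    using r_le[OF fin] unfolding r_def by (intro sum_nonneg mult_nonneg_nonneg) auto
  ultimately have A0: "(\<Sum>K\<in>#\<K>. (sum x K)^2) = 0" and B0: "(\<Sum>u\<in>V. (r - real (r_at \<K> u)) * (x u)^2) = 0"
    by linarith+
  have "\<forall>K\<in>#\<K>. sum x K = 0"
    using mset_zero[of "\<lambda>K. (sum x K)^2", OF _ A0] by simp
  moreover have "\<forall>u\<in>V. x u \<noteq> 0 \<longrightarrow> r_at \<K> u = r_max V \<K>"
  proof (intro ballI impI)
    fix u assume u: "u \<in> V" "x u \<noteq> 0"
    have nn: "\<forall>i\<in>V. 0 \<le> (r - real (r_at \<K> i)) * (x i)^2"
      using r_le[OF fin] unfolding r_def by auto
    have "(r - real (r_at \<K> u)) * (x u)^2 = 0"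
      using sum_nonneg_eq_0_iff[OF fin, of "\<lambda>u. (r - real (r_at \<K> u)) * (x u)^2"] nn B0 u(1)
      by blast
    then show "r_at \<K> u = r_max V \<K>" using u(2) unfolding r_def by simp
  qed
  ultimately show ?thesis by blast
qed

lemma conv:
  fixes x :: "'a \<Rightarrow> real"
  assumes w: "wcp V E mu \<K>" and sg: "simple_graph V E" and mu: "mu > 0"
    and nz: "\<exists>v\<in>V. x v \<noteq> 0" and s0: "\<forall>K\<in>#\<K>. sum x K = 0"
    and rr: "\<forall>u\<in>V. x u \<noteq> 0 \<longrightarrow> r_at \<K> u = r_max V \<K>"
  shows "- real (r_max V \<K>) / real mu \<in> adj_eigenvalues V E"
proof -
  have "adjs V E x u = (- real (r_max V \<K>) / real mu) * x u" if u: "u \<in> V" for u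
  proof -
    have "real mu * adjs V E x u = (\<Sum>K\<in>#\<K>. if u \<in> K then sum x K - x u else 0)"
      by (rule key[OF w sg u])
    also have "\<dots> = (\<Sum>K\<in>#\<K>. if u \<in> K then - x u else 0)"
      by (rule mset_cong) (use s0 in auto)
    also have "\<dots> = - x u * real (r_at \<K> u)" by (simp add: mset_if_count r_at_def)
    also have "\<dots> = - x u * real (r_max V \<K>)" using rr u by (cases "x u = 0") auto
    finally show ?thesis using mu by (simp add: field_simps)
  qed
  then show ?thesis unfolding adj_eigenvalues_def adjs_def using nz by blast
qed



lemma lam_char:
  assumes w: "wcp V E mu \<K>" and sg: "simple_graph V E" and mu: "mu > 0" and ne: "V \<noteq> {}"
  shows "lambda_min V E = - real (r_max V \<K>) / real mu \<longleftrightarrow>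
         - real (r_max V \<K>) / real mu \<in> adj_eigenvalues V E"
proof -
  have fin: "finite V" using sg by (simp add: simple_graph_def)
  have F: "finite (adj_eigenvalues V E)" by (rule finite_eig[OF fin])
  have N: "adj_eigenvalues V E \<noteq> {}" by (rule nonempty_eig[OF fin ne])
  have mem: "lambda_min V E \<in> adj_eigenvalues V E" unfolding lambda_min_def using F N by simp
  have lb: "lambda_min V E \<ge> - real (r_max V \<K>) / real mu" using bound[OF w sg mu mem] .
  show ?thesis
  proof
    assume "lambda_min V E = - real (r_max V \<K>) / real mu" then show "- real (r_max V \<K>) / real mu \<in> adj_eigenvalues V E"
      using mem by simp
  next
    assume "- real (r_max V \<K>) / real mu \<in> adj_eigenvalues V E"
    then have "lambda_min V E \<le> - real (r_max V \<K>) / real mu" unfolding lambda_min_def using F by simp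
    then show "lambda_min V E = - real (r_max V \<K>) / real mu" using lb by simp
  qed
qed

lemma cp_wcp: "clique_partition V E mu \<K> \<Longrightarrow> wcp V E mu \<K>"
  unfolding clique_partition_def wcp_def is_clique_def by blast

lemma restrict_r_at:
  assumes "u \<in> W" shows "r_at (restrict_partition \<K> W) u = r_at \<K> u"
proof -
  have "filter_mset (\<lambda>K. K \<inter> W \<noteq> {} \<and> u \<in> K \<inter> W) \<K> = filter_mset (\<lambda>K. u \<in> K) \<K>"
    using assms by (intro filter_mset_cong0) auto
  then show ?thesis
    unfolding r_at_def restrict_partition_def filter_mset_image_mset filter_filter_mset by simp
qed

lemma restrict_sg:
  assumes "simple_graph V E" "W \<subseteq> V" shows "simple_graph W (induced_edges E W)"
  using assms finite_subset unfolding simple_graph_def induced_edges_def by blast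

lemma restrict_wcp:
  assumes w: "wcp V E mu \<K>" and sg: "simple_graph V E" and W: "W \<subseteq> V"
  shows "wcp W (induced_edges E W) mu (restrict_partition \<K> W)"
proof -
  have A: "K' \<subseteq> W \<and> (\<forall>u\<in>K'. \<forall>v\<in>K'. u \<noteq> v \<longrightarrow> {u, v} \<in> induced_edges E W)"
    if "K' \<in># restrict_partition \<K> W" for K'
  proof -
  from that obtain K where K: "K \<in># \<K>" "K' = K \<inter> W" unfolding restrict_partition_def by auto
  then show "K' \<subseteq> W \<and> (\<forall>u\<in>K'. \<forall>v\<in>K'. u \<noteq> v \<longrightarrow> {u, v} \<in> induced_edges E W)"
    using w unfolding wcp_def induced_edges_def by auto
  qed
  have B: "size (filter_mset (\<lambda>K'. e \<subseteq> K') (restrict_partition \<K> W)) = mu"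
    if e: "e \<in> induced_edges E W" for e
  proof -
  from e have eE: "e \<in> E" and eW: "e \<subseteq> W" unfolding induced_edges_def by auto
  have "e \<noteq> {}" using sg eE unfolding simple_graph_def by fastforce
  then have "filter_mset (\<lambda>K. K \<inter> W \<noteq> {} \<and> e \<subseteq> K \<inter> W) \<K> = filter_mset (\<lambda>K. e \<subseteq> K) \<K>"
    using eW by (intro filter_mset_cong0) auto
  then have "size (filter_mset (\<lambda>K'. e \<subseteq> K') (restrict_partition \<K> W)) = size (filter_mset (\<lambda>K. e \<subseteq> K) \<K>)"
    unfolding restrict_partition_def filter_mset_image_mset filter_filter_mset by simp
  also have "\<dots> = mu" using w eE unfolding wcp_def by blast
  finally show ?thesis .
  qed
  show ?thesis unfolding wcp_def using A B by blast
qed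

lemma support_ess:
  fixes x :: "'a \<Rightarrow> real"
  assumes w: "wcp V E mu \<K>" and fin: "finite V"
    and s0: "\<forall>K\<in>#\<K>. sum x K = 0"
    and rr: "\<forall>u\<in>V. x u \<noteq> 0 \<longrightarrow> r_at \<K> u = r_max V \<K>"
  shows "\<forall>u\<in>V. x u \<noteq> 0 \<longrightarrow> u \<in> essential V \<K>"
proof -
  define W0 where "W0 = {u\<in>V. r_at \<K> u = r_max V \<K>}"
  have Kv: "K \<subseteq> V" if "K \<in># \<K>" for K using w that by (simp add: wcp_def)
  have "\<forall>u\<in>V. x u \<noteq> 0 \<longrightarrow> u \<in> (ess_step \<K> ^^ i) W0" for i
  proof (induction i)
    case 0 then show ?case using rr by (simp add: W0_def)
  next
    case (Suc i)
    show ?case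
    proof (intro ballI impI)
      fix u assume u: "u \<in> V" "x u \<noteq> 0"
      let ?W = "(ess_step \<K> ^^ i) W0"
      have uW: "u \<in> ?W" using Suc u by blast
      have "\<not> (\<exists>K\<in>#\<K>. K \<inter> ?W = {u})"
      proof
        assume "\<exists>K\<in>#\<K>. K \<inter> ?W = {u}"
        then obtain K where K: "K \<in># \<K>" "K \<inter> ?W = {u}" by auto
        have fK: "finite K" using Kv[OF K(1)] fin finite_subset by blast
        have uK: "u \<in> K" using K(2) by auto
        have "sum x K = x u + sum x (K - {u})" using fK uK by (simp add: sum.remove)
        also have "sum x (K - {u}) = 0"
        proof (rule sum.neutral, rule ballI)
          fix v assume v: "v \<in> K - {u}"
          then have "v \<notin> ?W" using K(2) by auto
          moreover have "v \<in> V" using Kv[OF K(1)] v by auto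
          ultimately show "x v = 0" using Suc by blast
        qed
        finally have "x u = 0" using s0 K(1) by simp
        with u show False by simp
      qed
      then show "u \<in> (ess_step \<K> ^^ Suc i) W0" using uW by (simp add: ess_step_def)
    qed
  qed
  then show ?thesis unfolding essential_def W0_def by blast
qed

lemma ess_sub: "essential V \<K> \<subseteq> {u\<in>V. r_at \<K> u = r_max V \<K>}"
  unfolding essential_def by (metis (no_types, lifting) INT_lower UNIV_I funpow_0)



theorem mainTheorem4:
  fixes V :: "'a set" and E :: "'a set set" and mu :: nat and \<K> :: "'a set multiset"
  assumes "simple_graph V E" and "V \<noteq> {}" and "mu > 0"
    and "clique_partition V E mu \<K>"
  defines "Vs \<equiv> essential V \<K>"
  defines "Es \<equiv> induced_edges E Vs"
  defines "Ks \<equiv> restrict_partition \<K> Vs"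
  shows "(lambda_min V E = - real (r_max V \<K>) / real mu \<longleftrightarrow>
           Vs \<noteq> {} \<and> lambda_min Vs Es = - real (r_max Vs Ks) / real mu)
       \<and> (lambda_min V E = - real (r_max V \<K>) / real mu \<longrightarrow>
           lambda_min V E = lambda_min Vs Es \<and> (\<forall>u\<in>Vs. r_at Ks u = r_max V \<K>))"
proof -
  note sg = assms(1) and ne = assms(2) and mu = assms(3)
  have w: "wcp V E mu \<K>" using assms(4) by (rule cp_wcp)
  have fin: "finite V" using sg by (simp add: simple_graph_def)
  define r where "r = r_max V \<K>"
  define c where "c = - real r / real mu"
  have VsW0: "Vs \<subseteq> {u\<in>V. r_at \<K> u = r}" unfolding Vs_def r_def by (rule ess_sub)
  then have VsV: "Vs \<subseteq> V" by auto
  have rKs: "\<forall>u\<in>Vs. r_at Ks u = r"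
    using VsW0 restrict_r_at unfolding Ks_def by fastforce
  have sgs: "simple_graph Vs Es" unfolding Es_def by (rule restrict_sg[OF sg VsV])
  have ws: "wcp Vs Es mu Ks" unfolding Es_def Ks_def by (rule restrict_wcp[OF w sg VsV])
  have finVs: "finite Vs" using VsV fin finite_subset by blast
  have rmax: "r_max Vs Ks = r" if "Vs \<noteq> {}"
  proof -
    have "r_at Ks ` Vs = {r}" using rKs that by auto
    then show ?thesis unfolding r_max_def by simp
  qed
  have charG: "lambda_min V E = c \<longleftrightarrow> c \<in> adj_eigenvalues V E"
    unfolding c_def r_def by (rule lam_char[OF w sg mu ne])
  have charGs: "lambda_min Vs Es = - real (r_max Vs Ks) / real mu \<longleftrightarrow> c \<in> adj_eigenvalues Vs Es"
    if "Vs \<noteq> {}"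
    using lam_char[OF ws sgs mu that] rmax[OF that] unfolding c_def by simp
  have equiv: "c \<in> adj_eigenvalues V E \<longleftrightarrow> Vs \<noteq> {} \<and> c \<in> adj_eigenvalues Vs Es"
  proof
    assume "c \<in> adj_eigenvalues V E"
    then obtain x where nz: "\<exists>v\<in>V. x v \<noteq> 0" and eq: "\<forall>u\<in>V. adjs V E x u = c * x u"
      unfolding adj_eigenvalues_def adjs_def by auto
    from eqcase[OF w sg mu, of x] eq
    have s0: "\<forall>K\<in>#\<K>. sum x K = 0" and rr: "\<forall>u\<in>V. x u \<noteq> 0 \<longrightarrow> r_at \<K> u = r_max V \<K>"
      unfolding c_def r_def by auto
    have supp: "\<forall>u\<in>V. x u \<noteq> 0 \<longrightarrow> u \<in> Vs"
      unfolding Vs_def by (rule support_ess[OF w fin s0 rr])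
    then have nzs: "\<exists>v\<in>Vs. x v \<noteq> 0" using nz by blast
    then have ne': "Vs \<noteq> {}" by auto
    have s0s: "\<forall>K'\<in>#Ks. sum x K' = 0"
    proof
      fix K' assume "K' \<in># Ks"
      then obtain K where K: "K \<in># \<K>" "K' = K \<inter> Vs" unfolding Ks_def restrict_partition_def by auto
      have KV: "K \<subseteq> V" using w K(1) by (simp add: wcp_def)
      have fK: "finite K" using KV fin finite_subset by blast
      have "sum x (K \<inter> Vs) = sum x K"
        by (rule sum.mono_neutral_left[OF fK]) (use supp KV in auto)
      then show "sum x K' = 0" using s0 K by simp
    qed
    have rrs: "\<forall>u\<in>Vs. x u \<noteq> 0 \<longrightarrow> r_at Ks u = r_max Vs Ks"
      using rKs rmax[OF ne'] by simp
    have "- real (r_max Vs Ks) / real mu \<in> adj_eigenvalues Vs Es"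
      by (rule conv[OF ws sgs mu nzs s0s rrs])
    then show "Vs \<noteq> {} \<and> c \<in> adj_eigenvalues Vs Es" using ne' rmax[OF ne'] unfolding c_def by simp
  next
    assume "Vs \<noteq> {} \<and> c \<in> adj_eigenvalues Vs Es"
    then have ne': "Vs \<noteq> {}" and cs: "c \<in> adj_eigenvalues Vs Es" by auto
    from cs obtain y where nz: "\<exists>v\<in>Vs. y v \<noteq> 0" and eq: "\<forall>u\<in>Vs. adjs Vs Es y u = c * y u"
      unfolding adj_eigenvalues_def adjs_def by auto
    from eqcase[OF ws sgs mu, of y] eq rmax[OF ne']
    have s0s: "\<forall>K'\<in>#Ks. sum y K' = 0"
      unfolding c_def by auto
    define x where "x v = (if v \<in> Vs then y v else 0)" for v
    have nzx: "\<exists>v\<in>V. x v \<noteq> 0" using nz VsV unfolding x_def by auto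
    have s0: "\<forall>K\<in>#\<K>. sum x K = 0"
    proof
      fix K assume K: "K \<in># \<K>"
      have KV: "K \<subseteq> V" using w K by (simp add: wcp_def)
      have fK: "finite K" using KV fin finite_subset by blast
      have "sum x K = sum y (K \<inter> Vs)"
        unfolding x_def using fK by (simp add: sum.inter_restrict)
      also have "\<dots> = 0"
      proof (cases "K \<inter> Vs = {}")
        case True then show ?thesis by simp
      next
        case False
        then have "K \<inter> Vs \<in># Ks" unfolding Ks_def restrict_partition_def using K by auto
        then show ?thesis using s0s by blast
      qed
      finally show "sum x K = 0" .
    qed
    have rr: "\<forall>u\<in>V. x u \<noteq> 0 \<longrightarrow> r_at \<K> u = r_max V \<K>"
      using VsW0 unfolding x_def r_def by (auto split: if_splits)
    show "c \<in> adj_eigenvalues V E" unfolding c_def r_def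
      by (rule conv[OF w sg mu nzx s0 rr])
  qed
  show ?thesis
  proof (intro conjI impI)
    show "lambda_min V E = - real (r_max V \<K>) / real mu \<longleftrightarrow>
           Vs \<noteq> {} \<and> lambda_min Vs Es = - real (r_max Vs Ks) / real mu"
      using charG charGs equiv unfolding c_def r_def by blast
  next
    assume h: "lambda_min V E = - real (r_max V \<K>) / real mu"
    then have ne2: "Vs \<noteq> {}" and cs: "c \<in> adj_eigenvalues Vs Es" using charG equiv unfolding c_def r_def by auto
    have "lambda_min Vs Es = c" using charGs[OF ne2] rmax[OF ne2] cs unfolding c_def by simp
    then show "lambda_min V E = lambda_min Vs Es" using h unfolding c_def r_def by simp
  next
    show "\<forall>u\<in>Vs. r_at Ks u = r_max V \<K>" using rKs unfolding r_def .
  qed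
qed


end
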